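(* For $n\in\mathbb{N}$, $q>0$ and $M_n\in\{0,1,\dots,n-1\}$, $$\mathcal{P}_n^q(\mathcal{S}(n,M_n))=\begin{cases} q\,\dfrac{M_n}{n}\Big(\dfrac{n!}{M_n!}\,\dfrac{1}{\prod_{l=M_n}^{n-1}(l+q)}\Big)\displaystyle\sum_{j=M_n}^{n-1}\frac1j, & M_n\in\{1,\dots,n-1\};\\[2ex] \dfrac{(n-1)!}{\prod_{l=1}^{n-1}(l+q)}, & M_n=0.\end{cases}$$
   Context: For $n\in\mathbb{N}$ and $q>0$, $P_n^{\mathrm{LR}^-;q}$ is the probability measure on $S_n$ given by $P_n^{\mathrm{LR}^-;q}(\sigma)=q^{\mathrm{LR}^-_n(\sigma)}/(q(q+1)\cdots(q+n-1))$, where $\mathrm{LR}^-_n(\sigma)=|\{j\in[n]:\sigma_j=\min\{\sigma_i:1\le i\le j\}\}|$ is the number of left-to-right minima of $\sigma$. Secretary problem setting: $n$ items with ranks $1,\dots,n$ (rank $1$ is the highest) arrive one at a time; $\sigma=\sigma_1\cdots\sigma_n\in S_n$ means the $j$th arriving item has rank $\sigma_j$, and $\sigma$ is random with law $P_n^{\mathrm{LR}^-;q}$. The observer only sees relative ranks of items arrived so far and must select or irrevocably reject each item; the last item must be accepted if reached. For $M_n\in\{0,\dots,n-1\}$, the strategy $\mathcal{S}(n,M_n)$ rejects the first $M_n$ items and then selects the first later item ranked higher than all of the first $M_n$ items (if no such item exists, the last item is taken); $\mathcal{S}(n,0)$ selects the first item. $\mathcal{P}_n^{q}(\mathcal{S}(n,M_n))$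 is the probability under $P_n^{\mathrm{LR}^-;q}$ that $\mathcal{S}(n,M_n)$ selects the item of rank $1$. *)

theory Defs
  imports Complex_Main "HOL-Combinatorics.Multiset_Permutations"
begin

text \<open>A permutation sigma of [n] is represented as the list [sigma_1, ..., sigma_n];
  position j (1-based) is list index j-1. Rank 1 is the best item.\<close>

definition LR_minus :: "nat list \<Rightarrow> nat" where
  "LR_minus xs = card {j. j < length xs \<and> xs ! j = Min (set (take (Suc j) xs))}"

definition LR_weight :: "nat \<Rightarrow> real \<Rightarrow> nat list \<Rightarrow> real" where
  "LR_weight n q xs = q ^ LR_minus xs / pochhammer q n"

text \<open>0-based index of the item chosen by strategy S(n,M).\<close>
definition sel_index :: "nat \<Rightarrow> nat \<Rightarrow> nat list \<Rightarrow> nat" where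
  "sel_index n M xs =
     (if M = 0 then 0
      else if (\<exists>j. M \<le> j \<and> j < n \<and> xs ! j < Min (set (take M xs)))
      then (LEAST j. M \<le> j \<and> j < n \<and> xs ! j < Min (set (take M xs)))
      else n - 1)"

definition strategy_success :: "nat \<Rightarrow> nat \<Rightarrow> nat list \<Rightarrow> bool" where
  "strategy_success n M xs \<longleftrightarrow> xs ! sel_index n M xs = 1"

definition success_prob :: "nat \<Rightarrow> real \<Rightarrow> nat \<Rightarrow> real" where
  "success_prob n q M =
     (\<Sum>xs\<in>{xs \<in> permutations_of_set {1..n}. strategy_success n M xs}. LR_weight n q xs)"

end

theory Submission
  imports Defs
begin


definition lrm :: "nat list \<Rightarrow> nat \<Rightarrow> bool" where
  "lrm xs j \<longleftrightarrow> xs ! j = Min (set (take (Suc j) xs))"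

definition cnt :: "nat \<Rightarrow> nat list \<Rightarrow> nat" where
  "cnt K xs = card {j. K \<le> j \<and> j < length xs \<and> lrm xs j}"

lemma LR_minus_lrm: "LR_minus xs = card {j. j < length xs \<and> lrm xs j}"
  unfolding LR_minus_def lrm_def by simp

lemma lrm_iff:
  assumes "distinct xs" "j < length xs"
  shows "lrm xs j \<longleftrightarrow> (\<forall>i<j. xs ! j < xs ! i)"
proof -
  have lt: "length (take (Suc j) xs) = Suc j" using assms(2) by simp
  have st: "set (take (Suc j) xs) = {xs ! i | i. i \<le> j}"
  proof -
    have "set (take (Suc j) xs) = {take (Suc j) xs ! i | i. i < Suc j}"
      by (metis lt set_conv_nth)
    also have "\<dots> = {xs ! i | i. i \<le> j}"
      by (auto simp: less_Suc_eq_le; metis le_imp_less_Suc nth_take)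
    finally show ?thesis .
  qed
  have "lrm xs j \<longleftrightarrow> (\<forall>i\<le>j. xs ! j \<le> xs ! i)"
    unfolding lrm_def st
    by (subst eq_commute, subst Min_eq_iff) auto
  also have "\<dots> \<longleftrightarrow> (\<forall>i<j. xs ! j < xs ! i)"
  proof -
    have "xs ! j \<noteq> xs ! i" if "i < j" for i
      using nth_eq_iff_index_eq[OF assms(1)] assms(2) that by fastforce
    then show ?thesis by (auto simp: le_less)
  qed
  finally show ?thesis .
qed

lemma lrm_snoc_lt: "j < length ys \<Longrightarrow> lrm (ys @ [a]) j = lrm ys j"
  unfolding lrm_def by (simp add: nth_append)

lemma lrm_snoc_last: "lrm (ys @ [a]) (length ys) \<longleftrightarrow> a = Min (insert a (set ys))"
  unfolding lrm_def by simp

lemma set_snoc_split: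
  "{j. K \<le> j \<and> j < length (ys @ [a]) \<and> lrm (ys @ [a]) j} =
   {j. K \<le> j \<and> j < length ys \<and> lrm ys j} \<union>
   (if K \<le> length ys \<and> a = Min (insert a (set ys)) then {length ys} else {})"
  by (auto simp: lrm_snoc_lt lrm_snoc_last less_Suc_eq)

lemma cnt_snoc: "K \<le> length ys \<Longrightarrow>
   cnt K (ys @ [a]) = cnt K ys + (if a = Min (insert a (set ys)) then 1 else 0)"
  unfolding cnt_def set_snoc_split by (auto simp: card_insert_if)

lemma LR_snoc:
   "LR_minus (ys @ [a]) = LR_minus ys + (if a = Min (insert a (set ys)) then 1 else 0)"
  using cnt_snoc[of 0 ys a] unfolding cnt_def LR_minus_lrm by simp

lemma perms_snoc_sum:
  assumes "finite A" "A \<noteq> {}"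
  shows "(\<Sum>xs\<in>permutations_of_set A. f xs) =
         (\<Sum>a\<in>A. \<Sum>ys\<in>permutations_of_set (A - {a}). f (ys @ [a]))"
proof -
  define h where "h = (\<lambda>p::'a \<times> 'a list. snd p @ [fst p])"
  define S where "S = (SIGMA a:A. permutations_of_set (A - {a}))"
  have img: "permutations_of_set A = h ` S"
  proof
    show "permutations_of_set A \<subseteq> h ` S"
    proof
      fix xs assume xs: "xs \<in> permutations_of_set A"
      have d: "set xs = A" "distinct xs" using permutations_of_setD[OF xs] by auto
      have ne: "xs \<noteq> []" using d(1) assms(2) by auto
      obtain ys x where xe: "xs = ys @ [x]" using ne rev_exhaust by blast
      have d2: "insert x (set ys) = A" "distinct ys" "x \<notin> set ys" using d unfolding xe by auto
      have "x \<in> A" using d2 by blast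
      moreover have "set ys = A - {x}" using d2 by blast
      ultimately have m: "(x, ys) \<in> S" unfolding S_def using d2 by (simp add: permutations_of_set_def)
      have q: "xs = h (x, ys)" unfolding h_def xe by simp
      show "xs \<in> h ` S" using q m by blast
    qed
  next
    show "h ` S \<subseteq> permutations_of_set A"
    proof
      fix xs assume "xs \<in> h ` S"
      then obtain x ys where m: "x \<in> A" "ys \<in> permutations_of_set (A - {x})" and q: "xs = ys @ [x]"
        unfolding S_def h_def by auto
      have "set ys = A - {x}" "distinct ys" using permutations_of_setD[OF m(2)] by auto
      then show "xs \<in> permutations_of_set A" unfolding q using m(1)
        by (intro permutations_of_setI) auto
    qed
  qed
  have inj: "inj_on h S"
  proof (rule inj_onI)
    fix p p' assume "p \<in> S" "p' \<in> S" "h p = h p'"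
    then have "snd p = snd p'" "fst p = fst p'" unfolding h_def by auto
    then show "p = p'" by (simp add: prod_eq_iff)
  qed
  have "(\<Sum>xs\<in>permutations_of_set A. f xs) = sum (f \<circ> h) S"
    unfolding img by (rule sum.reindex[OF inj])
  also have "\<dots> = (\<Sum>(a,ys)\<in>S. f (ys @ [a]))"
    by (rule sum.cong) (auto simp: h_def)
  also have "\<dots> = (\<Sum>a\<in>A. \<Sum>ys\<in>permutations_of_set (A - {a}). f (ys @ [a]))"
    unfolding S_def by (rule sum.Sigma[symmetric]) (auto simp: assms)
  finally show ?thesis .
qed

lemma W_formula:
  fixes q :: real
  shows "finite A \<Longrightarrow> card A = m \<Longrightarrow> (\<Sum>xs\<in>permutations_of_set A. q ^ LR_minus xs) = pochhammer q m"
proof (induction m arbitrary: A)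
  case 0
  then have "A = {}" by auto
  then show ?case by (simp add: LR_minus_def)
next
  case (Suc m)
  have ne: "A \<noteq> {}" using Suc.prems by auto
  have mA: "Min A \<in> A" using Suc.prems ne by simp
  have inner: "(\<Sum>ys\<in>permutations_of_set (A - {a}). q ^ LR_minus (ys @ [a])) =
       (if a = Min A then q else 1) * pochhammer q m" if a: "a \<in> A" for a
  proof -
    have "(\<Sum>ys\<in>permutations_of_set (A - {a}). q ^ LR_minus (ys @ [a])) =
          (\<Sum>ys\<in>permutations_of_set (A - {a}). (if a = Min A then q else 1) * q ^ LR_minus ys)"
    proof (rule sum.cong[OF refl])
      fix ys assume "ys \<in> permutations_of_set (A - {a})"
      then have "insert a (set ys) = A" using a by (auto simp: permutations_of_set_def)
      then show "q ^ LR_minus (ys @ [a]) = (if a = Min A then q else 1) * q ^ LR_minus ys"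
        by (simp add: LR_snoc)
    qed
    also have "\<dots> = (if a = Min A then q else 1) * pochhammer q m"
      using Suc.IH[of "A - {a}"] Suc.prems a by (simp add: sum_distrib_left[symmetric])
    finally show ?thesis .
  qed
  have "(\<Sum>xs\<in>permutations_of_set A. q ^ LR_minus xs) =
        (\<Sum>a\<in>A. \<Sum>ys\<in>permutations_of_set (A - {a}). q ^ LR_minus (ys @ [a]))"
    by (rule perms_snoc_sum[OF Suc.prems(1) ne])
  also have "\<dots> = (\<Sum>a\<in>A. (if a = Min A then q else 1) * pochhammer q m)"
    by (rule sum.cong[OF refl]) (rule inner)
  also have "\<dots> = q * pochhammer q m + (\<Sum>a\<in>A - {Min A}. (if a = Min A then q else 1) * pochhammer q m)"
    by (simp only: sum.remove[OF Suc.prems(1) mA] simp_thms if_True mult_1)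
  also have "(\<Sum>a\<in>A - {Min A}. (if a = Min A then q else 1) * pochhammer q m) = (\<Sum>a\<in>A - {Min A}. pochhammer q m)"
    by (rule sum.cong) auto
  also have "(\<Sum>a\<in>A - {Min A}. pochhammer q m) = real m * pochhammer q m"
    using Suc.prems mA by simp
  also have "q * pochhammer q m + real m * pochhammer q m = pochhammer q (Suc m)"
    by (simp add: pochhammer_Suc algebra_simps)
  finally show ?case .
qed

definition g0 :: "real \<Rightarrow> nat \<Rightarrow> nat \<Rightarrow> real" where
  "g0 q K m = pochhammer q K * (\<Prod>i=K..<m. real i)"

definition g1 :: "real \<Rightarrow> nat \<Rightarrow> nat \<Rightarrow> real" where
  "g1 q K m = q * g0 q K m * (\<Sum>j=K..<m. 1 / real j)"

lemma g0_Suc: "K \<le> m \<Longrightarrow> g0 q K (Suc m) = real m * g0 q K m"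
  unfolding g0_def by (simp add: prod.atLeastLessThan_Suc)

lemma g1_Suc: "1 \<le> K \<Longrightarrow> K \<le> m \<Longrightarrow> g1 q K (Suc m) = q * g0 q K m + real m * g1 q K m"
  unfolding g1_def by (simp add: g0_Suc sum.atLeastLessThan_Suc field_simps)

lemma T_formula:
  fixes q :: real
  assumes K: "1 \<le> K"
  shows "finite A \<Longrightarrow> card A = m \<Longrightarrow> K \<le> m \<Longrightarrow>
    (\<Sum>xs\<in>permutations_of_set A. if cnt K xs = 0 then q ^ LR_minus xs else 0) = g0 q K m \<and>
    (\<Sum>xs\<in>permutations_of_set A. if cnt K xs = 1 then q ^ LR_minus xs else 0) = g1 q K m"
proof (induction m arbitrary: A)
  case 0
  then show ?case using K by simp
next
  case (Suc m)
  show ?case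
  proof (cases "K = Suc m")
    case True
    have c0: "cnt K xs = 0" if "xs \<in> permutations_of_set A" for xs
      using length_finite_permutations_of_set[OF that] Suc.prems True
      unfolding cnt_def by auto
    have "(\<Sum>xs\<in>permutations_of_set A. if cnt K xs = 0 then q ^ LR_minus xs else 0) =
          (\<Sum>xs\<in>permutations_of_set A. q ^ LR_minus xs)"
      using c0 by (intro sum.cong) auto
    also have "\<dots> = pochhammer q (Suc m)" using W_formula Suc.prems by blast
    finally have 1: "(\<Sum>xs\<in>permutations_of_set A. if cnt K xs = 0 then q ^ LR_minus xs else 0) = g0 q K (Suc m)"
      using True by (simp add: g0_def)
    have "(\<Sum>xs\<in>permutations_of_set A. if cnt K xs = 1 then q ^ LR_minus xs else 0) = 0"
      using c0 by (intro sum.neutral) auto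
    then show ?thesis using 1 True by (simp add: g1_def)
  next
    case False
    then have Km: "K \<le> m" using Suc.prems by simp
    have ne: "A \<noteq> {}" using Suc.prems by auto
    have mA: "Min A \<in> A" using Suc.prems ne by simp
    have cardA: "card (A - {Min A}) = m" using Suc.prems mA by simp
    define T where "T c B = (\<Sum>xs\<in>permutations_of_set B. if cnt K xs = c then q ^ LR_minus xs else (0::real))" for c B
    have IH: "T 0 (A - {a}) = g0 q K m" "T 1 (A - {a}) = g1 q K m" if "a \<in> A" for a
      using Suc.IH[of "A - {a}"] Suc.prems that Km unfolding T_def by auto
    have inner: "(\<Sum>ys\<in>permutations_of_set (A - {a}). (if cnt K (ys @ [a]) = c then q ^ LR_minus (ys @ [a]) else 0)) =
       (if a = Min A then (if c = 0 then 0 else q * T (c - 1) (A - {a})) else T c (A - {a}))"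
      if a: "a \<in> A" for a c
    proof -
      have "(\<Sum>ys\<in>permutations_of_set (A - {a}). (if cnt K (ys @ [a]) = c then q ^ LR_minus (ys @ [a]) else 0)) =
          (\<Sum>ys\<in>permutations_of_set (A - {a}). (if a = Min A then (if c = 0 then 0 else q * (if cnt K ys = c - 1 then q ^ LR_minus ys else 0)) else (if cnt K ys = c then q ^ LR_minus ys else 0)))"
      proof (rule sum.cong[OF refl])
        fix ys assume ys: "ys \<in> permutations_of_set (A - {a})"
        then have i: "insert a (set ys) = A" using a by (auto simp: permutations_of_set_def)
        have "length ys = m" using length_finite_permutations_of_set[OF ys] cardA Suc.prems a
          by simp
        then have "K \<le> length ys" using Km by simp
        then show "(if cnt K (ys @ [a]) = c then q ^ LR_minus (ys @ [a]) else 0) =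
          (if a = Min A then (if c = 0 then 0 else q * (if cnt K ys = c - 1 then q ^ LR_minus ys else 0)) else (if cnt K ys = c then q ^ LR_minus ys else 0))"
          using i by (auto simp: cnt_snoc LR_snoc)
      qed
      also have "\<dots> = (if a = Min A then (if c = 0 then 0 else q * T (c - 1) (A - {a})) else T c (A - {a}))"
        unfolding T_def by (auto simp: sum_distrib_left)
      finally show ?thesis .
    qed
    have split: "T c A = (if c = 0 then 0 else q * T (c - 1) (A - {Min A})) + (\<Sum>a\<in>A - {Min A}. T c (A - {a}))" for c
    proof -
      have "T c A = (\<Sum>a\<in>A. \<Sum>ys\<in>permutations_of_set (A - {a}). (if cnt K (ys @ [a]) = c then q ^ LR_minus (ys @ [a]) else 0))"
        unfolding T_def[of c A] by (rule perms_snoc_sum[OF Suc.prems(1) ne])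
      also have "\<dots> = (\<Sum>a\<in>A. (if a = Min A then (if c = 0 then 0 else q * T (c - 1) (A - {a})) else T c (A - {a})))"
        by (rule sum.cong[OF refl]) (rule inner)
      also have "\<dots> = (if c = 0 then 0 else q * T (c - 1) (A - {Min A})) + (\<Sum>a\<in>A - {Min A}. (if a = Min A then (if c = 0 then 0 else q * T (c - 1) (A - {a})) else T c (A - {a})))"
        by (simp only: sum.remove[OF Suc.prems(1) mA] simp_thms if_True)
      also have "(\<Sum>a\<in>A - {Min A}. (if a = Min A then (if c = 0 then 0 else q * T (c - 1) (A - {a})) else T c (A - {a}))) = (\<Sum>a\<in>A - {Min A}. T c (A - {a}))"
        by (rule sum.cong) auto
      finally show ?thesis .
    qed
    have s0: "(\<Sum>a\<in>A - {Min A}. T 0 (A - {a})) = real m * g0 q K m"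
    proof -
      have "(\<Sum>a\<in>A - {Min A}. T 0 (A - {a})) = (\<Sum>a\<in>A - {Min A}. g0 q K m)"
        by (rule sum.cong) (auto intro: IH)
      then show ?thesis using cardA by simp
    qed
    have s1: "(\<Sum>a\<in>A - {Min A}. T 1 (A - {a})) = real m * g1 q K m"
    proof -
      have "(\<Sum>a\<in>A - {Min A}. T 1 (A - {a})) = (\<Sum>a\<in>A - {Min A}. g1 q K m)"
        by (rule sum.cong[OF refl]) (rule IH(2), blast)
      then show ?thesis using cardA by simp
    qed
    have "T 0 A = g0 q K (Suc m)" using split[of 0] s0 g0_Suc[OF Km] by simp
    moreover have "T 1 A = g1 q K (Suc m)" using split[of 1] s1 g1_Suc[OF K Km] IH(1)[OF mA] by simp
    ultimately show ?thesis unfolding T_def by simp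
  qed
qed



lemma perm_facts:
  assumes "xs \<in> permutations_of_set {1..n}"
  shows "length xs = n" "distinct xs" "set xs = {1..n}"
    "\<And>i. i < n \<Longrightarrow> xs ! i \<ge> 1" "n \<ge> 1 \<Longrightarrow> \<exists>p<n. xs ! p = 1"
proof -
  show l: "length xs = n" using length_finite_permutations_of_set[OF assms] by simp
  show d: "distinct xs" "set xs = {1..n}" using permutations_of_setD[OF assms] by auto
  show "\<And>i. i < n \<Longrightarrow> xs ! i \<ge> 1"
  proof -
    fix i assume "i < n"
    then have "xs ! i \<in> set xs" using l by simp
    then show "xs ! i \<ge> 1" using d by auto
  qed
  show "\<exists>p<n. xs ! p = 1" if n1: "n \<ge> 1"
  proof -
    have "1 \<in> set xs" using d n1 by auto
    then show ?thesis using l by (auto simp: in_set_conv_nth)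
  qed
qed

lemma succ_char0:
  assumes xs: "xs \<in> permutations_of_set {1..n}" and n: "n \<ge> 1"
  shows "strategy_success n 0 xs \<longleftrightarrow> cnt 1 xs = 0"
proof -
  note pf = perm_facts[OF xs]
  have l: "length xs = n" and d: "distinct xs" using pf by auto
  have ge: "\<And>i. i < n \<Longrightarrow> xs ! i \<ge> 1" using pf by auto
  obtain p where p: "p < n" "xs ! p = 1" using pf(5)[OF n] by auto
  have neq: "\<And>i j. i < n \<Longrightarrow> j < n \<Longrightarrow> xs ! i = xs ! j \<longleftrightarrow> i = j"
    using nth_eq_iff_index_eq[OF d] l by auto
  have fin: "finite {j. 1 \<le> j \<and> j < length xs \<and> lrm xs j}" by simp
  have "cnt 1 xs = 0 \<longleftrightarrow> (\<forall>j. 1 \<le> j \<and> j < n \<longrightarrow> \<not> lrm xs j)"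
    unfolding cnt_def using fin l by auto
  also have "\<dots> \<longleftrightarrow> xs ! 0 = 1"
  proof
    assume a: "\<forall>j. 1 \<le> j \<and> j < n \<longrightarrow> \<not> lrm xs j"
    have "lrm xs p"
    proof (subst lrm_iff[OF d])
      show "p < length xs" using p l by simp
      show "\<forall>i<p. xs ! p < xs ! i"
      proof (intro allI impI)
        fix i assume ip: "i < p"
        then have iN: "i < n" using p by simp
        have "xs ! i \<ge> 1" using ge[OF iN] .
        moreover have "xs ! i \<noteq> xs ! p" using neq[OF iN p(1)] ip by simp
        ultimately show "xs ! p < xs ! i" using p by simp
      qed
    qed
    then have "p = 0" using a p by (metis less_one not_le)
    then show "xs ! 0 = 1" using p by simp
  next
    assume a: "xs ! 0 = 1"
    show "\<forall>j. 1 \<le> j \<and> j < n \<longrightarrow> \<not> lrm xs j"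
    proof (intro allI impI notI)
      fix j assume j: "1 \<le> j \<and> j < n" and "lrm xs j"
      then have "xs ! j < xs ! 0" using lrm_iff[OF d] l by auto
      then show False using a ge j by fastforce
    qed
  qed
  finally show ?thesis unfolding strategy_success_def sel_index_def by simp
qed

lemma succ_char:
  assumes xs: "xs \<in> permutations_of_set {1..n}" and M: "1 \<le> M" "M < n"
  shows "strategy_success n M xs \<longleftrightarrow> cnt M xs = 1"
proof -
  note pf = perm_facts[OF xs]
  have l: "length xs = n" and d: "distinct xs" using pf by auto
  have ge: "\<And>i. i < n \<Longrightarrow> xs ! i \<ge> 1" using pf by auto
  obtain p where p: "p < n" "xs ! p = 1" using pf(5) M by auto
  have neq: "\<And>i j. i < n \<Longrightarrow> j < n \<Longrightarrow> xs ! i = xs ! j \<longleftrightarrow> i = j"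
    using nth_eq_iff_index_eq[OF d] l by auto
  have lrmI: "\<And>j. j < n \<Longrightarrow> lrm xs j \<longleftrightarrow> (\<forall>i<j. xs ! j < xs ! i)"
    using lrm_iff[OF d] l by auto
  define m0 where "m0 = Min (set (take M xs))"
  have tne: "set (take M xs) \<noteq> {}" using M l by (cases xs) auto
  have "m0 \<in> set (take M xs)" unfolding m0_def using tne by simp
  then obtain p0 where p0: "p0 < M" "xs ! p0 = m0"
    using M l by (auto simp: in_set_conv_nth)
  have m0le: "\<And>i. i < M \<Longrightarrow> m0 \<le> xs ! i"
  proof -
    fix i assume "i < M"
    then have "xs ! i \<in> set (take M xs)" using M l by (auto simp: in_set_conv_nth intro!: exI[of _ i])
    then show "m0 \<le> xs ! i" unfolding m0_def by simp
  qed
  define S where "S = {j. M \<le> j \<and> j < length xs \<and> lrm xs j}"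
  have cS: "cnt M xs = card S" unfolding cnt_def S_def ..
  define P where "P = (\<lambda>j. M \<le> j \<and> j < n \<and> xs ! j < m0)"
  have sel: "sel_index n M xs = (if (\<exists>j. P j) then (LEAST j. P j) else n - 1)"
    unfolding sel_index_def P_def m0_def using M by simp
  show ?thesis
  proof
    assume succ: "strategy_success n M xs"
    then have s1: "xs ! sel_index n M xs = 1" unfolding strategy_success_def .
    have E: "\<exists>j. P j"
    proof (rule ccontr)
      assume nE: "\<not> (\<exists>j. P j)"
      then have "xs ! (n - 1) = 1" using s1 sel by simp
      moreover have "p0 \<noteq> n - 1" using p0 M by simp
      then have "m0 \<noteq> 1" using p0 neq[of p0 "n-1"] M \<open>xs ! (n - 1) = 1\<close> by auto
      then have "m0 > 1" using ge[of p0] p0 M by simp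
      ultimately have "P (n - 1)" unfolding P_def using M by simp
      then show False using nE by blast
    qed
    define j0 where "j0 = (LEAST j. P j)"
    have Pj0: "P j0" unfolding j0_def using E by (metis LeastI)
    have nP: "\<And>j. j < j0 \<Longrightarrow> \<not> P j" unfolding j0_def by (rule not_less_Least)
    have x1: "xs ! j0 = 1" using s1 sel E j0_def by simp
    have "S = {j0}"
    proof
      show "{j0} \<subseteq> S"
      proof -
        have "lrm xs j0"
        proof (subst lrmI)
          show "j0 < n" using Pj0 P_def by simp
          show "\<forall>i<j0. xs ! j0 < xs ! i"
          proof (intro allI impI)
            fix i assume "i < j0"
            moreover have "j0 < n" using Pj0 P_def by simp
            ultimately have "xs ! i \<ge> 1" "xs ! i \<noteq> xs ! j0" using ge neq[of i j0] by auto
            then show "xs ! j0 < xs ! i" using x1 by simp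
          qed
        qed
        then show ?thesis using Pj0 l unfolding S_def P_def by simp
      qed
      show "S \<subseteq> {j0}"
      proof
        fix j assume "j \<in> S"
        then have j: "M \<le> j" "j < n" "lrm xs j" unfolding S_def using l by auto
        have jl: "\<forall>i<j. xs ! j < xs ! i" using j lrmI by simp
        show "j \<in> {j0}"
        proof (cases "j < j0")
          case True
          then have "\<not> xs ! j < m0" using nP j unfolding P_def by simp
          moreover have "p0 < j" using p0 j by simp
          then have "xs ! j < xs ! p0" using jl by simp
          ultimately show ?thesis using p0 by simp
        next
          case False
          show ?thesis
          proof (rule ccontr)
            assume "j \<notin> {j0}"
            then have "j0 < j" using False by simp
            then have "xs ! j < 1" using jl x1 by auto
            then show False using ge[OF j(2)] by simp
          qed
        qed
      qed
    qed
    then show "cnt M xs = 1" using cS by simp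
  next
    assume c1: "cnt M xs = 1"
    then obtain j1 where S1: "S = {j1}" using cS card_1_singletonE by metis
    then have j1: "M \<le> j1" "j1 < n" "lrm xs j1" unfolding S_def using l by auto
    have jl: "\<forall>i<j1. xs ! j1 < xs ! i" using j1 lrmI by simp
    have "xs ! j1 < m0" using jl p0 j1 by auto
    then have Pj1: "P j1" unfolding P_def using j1 by simp
    define j0 where "j0 = (LEAST j. P j)"
    have Pj0: "P j0" unfolding j0_def using Pj1 by (metis LeastI)
    have nP: "\<And>j. j < j0 \<Longrightarrow> \<not> P j" unfolding j0_def by (rule not_less_Least)
    have "lrm xs j0"
    proof (subst lrmI)
      show "j0 < n" using Pj0 P_def by simp
      show "\<forall>i<j0. xs ! j0 < xs ! i"
      proof (intro allI impI)
        fix i assume i: "i < j0"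
        show "xs ! j0 < xs ! i"
        proof (cases "i < M")
          case True
          then show ?thesis using m0le[OF True] Pj0 P_def by simp
        next
          case False
          then have "\<not> xs ! i < m0" using nP[OF i] i Pj0 unfolding P_def by simp
          then show ?thesis using Pj0 P_def by simp
        qed
      qed
    qed
    then have "j0 \<in> S" using Pj0 l unfolding S_def P_def by simp
    then have j01: "j0 = j1" using S1 by simp
    have "\<not> p < M"
    proof
      assume "p < M"
      then have "m0 \<le> 1" using m0le p by fastforce
      then show False using \<open>xs ! j1 < m0\<close> ge[OF j1(2)] by simp
    qed
    moreover have "lrm xs p"
    proof (subst lrmI)
      show "p < n" using p by simp
      show "\<forall>i<p. xs ! p < xs ! i"
      proof (intro allI impI)
        fix i assume ip: "i < p"
        then have iN: "i < n" using p by simp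
        have "xs ! i \<ge> 1" using ge[OF iN] .
        moreover have "xs ! i \<noteq> xs ! p" using neq[OF iN p(1)] ip by simp
        ultimately show "xs ! p < xs ! i" using p by simp
      qed
    qed
    ultimately have "p \<in> S" unfolding S_def using p l by simp
    then have "p = j0" using S1 j01 by simp
    then show "strategy_success n M xs"
      unfolding strategy_success_def sel j0_def[symmetric] using Pj1 p by auto
  qed
qed

lemma poch_split:
  fixes q :: real
  assumes "M \<le> n"
  shows "pochhammer q n = pochhammer q M * (\<Prod>l=M..<n. real l + q)"
  using assms
proof (induction n rule: dec_induct)
  case base then show ?case by simp
next
  case (step k)
  then show ?case by (simp add: pochhammer_Suc prod.atLeastLessThan_Suc algebra_simps)
qed

lemma prod_fact:
  assumes "M \<le> n"
  shows "real M * fact n = real n * fact M * (\<Prod>i=M..<n. real i)"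
  using assms
proof (induction n rule: dec_induct)
  case base then show ?case by simp
next
  case (step k)
  then show ?case by (simp add: prod.atLeastLessThan_Suc algebra_simps)
qed

lemma succ_sum:
  fixes q :: real
  assumes "\<And>xs. xs \<in> permutations_of_set {1..n} \<Longrightarrow> strategy_success n M xs \<longleftrightarrow> cnt K xs = c"
  shows "success_prob n q M =
    (\<Sum>xs\<in>permutations_of_set {1..n}. if cnt K xs = c then q ^ LR_minus xs else 0) / pochhammer q n"
proof -
  have "success_prob n q M = (\<Sum>xs\<in>permutations_of_set {1..n}. if strategy_success n M xs then LR_weight n q xs else 0)"
    unfolding success_prob_def by (rule sum.inter_filter) simp
  also have "\<dots> = (\<Sum>xs\<in>permutations_of_set {1..n}. (if cnt K xs = c then q ^ LR_minus xs else 0) / pochhammer q n)"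
    by (rule sum.cong[OF refl]) (simp add: assms LR_weight_def)
  also have "\<dots> = (\<Sum>xs\<in>permutations_of_set {1..n}. if cnt K xs = c then q ^ LR_minus xs else 0) / pochhammer q n"
    by (simp add: sum_divide_distrib)
  finally show ?thesis .
qed

lemma alg1:
  fixes Pm Pq N F Pi H q M :: real
  assumes "Pm \<noteq> 0" "Pq \<noteq> 0" "N \<noteq> 0" "F \<noteq> 0" "M * Fn = N * F * Pi"
  shows "q * (Pm * Pi) * H / (Pm * Pq) = q * (M / N) * (Fn / F / Pq) * H"
  using assms by (simp add: field_simps)

theorem theorem1p2:
  fixes n M :: nat and q :: real
  assumes "q > 0" and "M < n"
  shows "success_prob n q M =
    (if M \<ge> 1 then
       q * (real M / real n) * (fact n / fact M / (\<Prod>l=M..n-1. (real l + q)))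
         * (\<Sum>j=M..n-1. 1 / real j)
     else fact (n - 1) / (\<Prod>l=1..n-1. (real l + q)))"
proof -
  have n1: "n \<ge> 1" using assms by simp
  have iv: "\<And>a. {a..n-1} = {a..<n}" using n1 by auto
  have fin: "finite {1..n}" "card {1..n} = n" by auto
  show ?thesis
  proof (cases "M \<ge> 1")
    case True
    have "success_prob n q M = g1 q M n / pochhammer q n"
      using succ_sum[of n M M 1 q] succ_char[OF _ True assms(2)]
        T_formula[OF True fin, of q] assms(2) by simp
    also have "\<dots> = q * (real M / real n) * (fact n / fact M / (\<Prod>l=M..<n. (real l + q)))
         * (\<Sum>j=M..<n. 1 / real j)"
    proof -
      have ps: "pochhammer q n = pochhammer q M * (\<Prod>l=M..<n. real l + q)"
        by (rule poch_split) (use assms in simp)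
      have pf: "real M * fact n = real n * fact M * (\<Prod>i=M..<n. real i)"
        by (rule prod_fact) (use assms in simp)
      have pM: "pochhammer q M > 0" by (rule pochhammer_pos[OF assms(1)])
      have pQ: "(\<Prod>l=M..<n. real l + q) > 0" using assms by (intro prod_pos) auto
      have fM: "fact M > (0::real)" by simp
      show ?thesis unfolding g1_def g0_def ps
        by (rule alg1) (use pM pQ n1 fM pf assms in auto)
    qed
    finally show ?thesis using True iv by simp
  next
    case False
    then have M0: "M = 0" by simp
    have "success_prob n q M = g0 q 1 n / pochhammer q n"
      using succ_sum[of n M 1 0 q] succ_char0[OF _ n1] M0
        T_formula[OF order.refl fin n1, of q] by simp
    also have "\<dots> = fact (n - 1) / (\<Prod>l=1..<n. (real l + q))"
    proof -
      have ps: "pochhammer q n = q * (\<Prod>l=1..<n. real l + q)"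
        using poch_split[of 1 n q] n1 by simp
      have pf: "fact n = real n * (\<Prod>i=1..<n. real i)"
        using prod_fact[of 1 n] n1 by simp
      have fn: "fact n = real n * fact (n - 1)"
        using n1 by (cases n) auto
      have "(\<Prod>i=1..<n. real i) = fact (n - 1)" using pf fn n1 by simp
      then show ?thesis unfolding g0_def ps using assms by simp
    qed
    finally show ?thesis using False iv by simp
  qed
qed

end
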